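(* Let $\mathcal S$ be any set of collections $S=\{(y_d^1,\pi^1),\dots,(y_d^k,\pi^k)\}$ (with $y_d^t$ distinct elements of $\mathbb Y_d$ and $\pi^t\in\mathcal P_\Pi\cup\mathcal R_\Pi$). The program $\min\ c_1x+\eta$ subject to $x\in\mathcal X$ and, for each $S\in\mathcal S$, variables $y_c^S\ge0$, $y_d^S\in\mathbb Y_d$, $u^S$ with $\eta\ge c_{2,c}y_c^S+c_{2,d}y_d^S$, $B_{2,c}y_c^S+B_{2,d}y_d^S+Eu^S\ge d-B_1x$, $(u^S,\cdot)\in\mathcal{OU}(x,S)$, is a relaxation of the two-stage robust problem, and its optimal value is at most $w^*$.
   Context: $\mathcal X=\{x\in\mathbb R^{n_x}_+\times\mathbb Z^{m_x}_+: Ax\ge b\}$; $\mathcal U(x)=\{u\in\mathbb R^{n_u}_+: F(x)u\le h+Gx\}$, nonempty and bounded for $x\in\mathcal X$; $\mathcal Y(x,u)=\{(y_c,y_d)\in\mathbb R^{n_y}_+\times\mathbb Y_d: B_{2,c}y_c+B_{2,d}y_d\ge d-B_1x-Eu\}$, $\mathbb Y_d\subseteq\mathbb Z^{m_y}_+$ finite; $w^*=\min_{x\in\mathcal X}\big[c_1x+\max_{u\in\mathcal U(x)}\min_{(y_c,y_d)\in\mathcal Y(x,u)}(c_{2,c}y_c+c_{2,d}y_d)\big]$ (minimum over empty set $=+\infty$); standing assumption $\min\{c_1x+c_{2,c}y_c+c_{2,d}y_d: x\in\mathcal X,u\in\mathcal U(x),(y_c,y_d)\in\mathcal Y(x,u)\}>-\infty$.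 $\Pi=\{\pi\ge0: B_{2,c}^\intercal\pi\le c_{2,c}^\intercal\}$ with extreme points $\mathcal P_\Pi$ and extreme rays $\mathcal R_\Pi$. For $S=\{(y_d^t,\pi^t)\}_{t=1}^k$, $\mathcal{OU}(x,S)$ is the set of $(u,\hat\eta,\lambda,\mu)$ with: $\hat\eta\le c_{2,d}y_d^t+(d-B_1x-Eu-B_{2,d}y_d^t)^\intercal\pi^t$ ($\forall t$); $F(x)u\le h+Gx$; $F(x)^\intercal\lambda+\sum_tE^\intercal\pi^t\mu^t\ge0$; $\sum_t\mu^t=1$; $\mu^t(c_{2,d}y_d^t+(d-B_1x-Eu-B_{2,d}y_d^t)^\intercal\pi^t-\hat\eta)=0$ ($\forall t$); $\lambda\circ(h+Gx-F(x)u)=0$; $u\circ(F(x)^\intercal\lambda+\sum_tE^\intercal\pi^t\mu^t)=0$; $u,\lambda,\mu\ge0$ ($\circ$ componentwise product). *)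

theory Defs
  imports "HOL-Analysis.Analysis"
begin

definition vle :: "real^'n \<Rightarrow> real^'n \<Rightarrow> bool" where
  "vle v w \<longleftrightarrow> (\<forall>i. v$i \<le> w$i)"

definition Xset :: "real^'x^'mA \<Rightarrow> real^'mA \<Rightarrow> 'x set \<Rightarrow> (real^'x) set" where
  "Xset A b Ix = {x. vle 0 x \<and> (\<forall>i\<in>Ix. x$i \<in> \<int>) \<and> vle b (A *v x)}"

definition Uset :: "(real^'x \<Rightarrow> real^'u^'mF) \<Rightarrow> real^'mF \<Rightarrow> real^'x^'mF \<Rightarrow> real^'x \<Rightarrow> (real^'u) set" where
  "Uset F h G x = {u. vle 0 u \<and> vle (F x *v u) (h + G *v x)}"

definition Yset :: "real^'yc^'m2 \<Rightarrow> real^'yd^'m2 \<Rightarrow> (real^'yd) set \<Rightarrow> real^'m2 \<Rightarrow> real^'x^'m2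
    \<Rightarrow> real^'u^'m2 \<Rightarrow> real^'x \<Rightarrow> real^'u \<Rightarrow> ((real^'yc) \<times> (real^'yd)) set" where
  "Yset B2c B2d Yd d B1 E x u =
     {(yc, yd). vle 0 yc \<and> yd \<in> Yd \<and> vle (d - B1 *v x - E *v u) (B2c *v yc + B2d *v yd)}"

text \<open>Second-stage value max_u min_y (min over empty set = +infinity).\<close>
definition second_stage :: "(real^'x \<Rightarrow> real^'u^'mF) \<Rightarrow> real^'mF \<Rightarrow> real^'x^'mF
    \<Rightarrow> real^'yc^'m2 \<Rightarrow> real^'yd^'m2 \<Rightarrow> (real^'yd) set \<Rightarrow> real^'m2 \<Rightarrow> real^'x^'m2 \<Rightarrow> real^'u^'m2
    \<Rightarrow> real^'yc \<Rightarrow> real^'yd \<Rightarrow> real^'x \<Rightarrow> ereal" where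
  "second_stage F h G B2c B2d Yd d B1 E c2c c2d x =
     (SUP u\<in>Uset F h G x. INF yy\<in>Yset B2c B2d Yd d B1 E x u.
        ereal (c2c \<bullet> fst yy + c2d \<bullet> snd yy))"

definition wstar :: "real^'x^'mA \<Rightarrow> real^'mA \<Rightarrow> 'x set \<Rightarrow> real^'x
    \<Rightarrow> (real^'x \<Rightarrow> real^'u^'mF) \<Rightarrow> real^'mF \<Rightarrow> real^'x^'mF
    \<Rightarrow> real^'yc^'m2 \<Rightarrow> real^'yd^'m2 \<Rightarrow> (real^'yd) set \<Rightarrow> real^'m2 \<Rightarrow> real^'x^'m2 \<Rightarrow> real^'u^'m2
    \<Rightarrow> real^'yc \<Rightarrow> real^'yd \<Rightarrow> ereal" where
  "wstar A b Ix c1 F h G B2c B2d Yd d B1 E c2c c2d =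
     (INF x\<in>Xset A b Ix. ereal (c1 \<bullet> x) + second_stage F h G B2c B2d Yd d B1 E c2c c2d x)"

definition PiSet :: "real^'yc^'m2 \<Rightarrow> real^'yc \<Rightarrow> (real^'m2) set" where
  "PiSet B2c c2c = {p. vle 0 p \<and> vle (transpose B2c *v p) c2c}"

definition rec_cone :: "('a::real_vector) set \<Rightarrow> 'a set" where
  "rec_cone S = {r. \<forall>x\<in>S. \<forall>t\<ge>0. x + t *\<^sub>R r \<in> S}"

definition extreme_ray_of :: "('a::real_vector) \<Rightarrow> 'a set \<Rightarrow> bool" where
  "extreme_ray_of r S \<longleftrightarrow> r \<in> rec_cone S \<and> r \<noteq> 0 \<and>
     (\<forall>a\<in>rec_cone S. \<forall>b\<in>rec_cone S. a + b = r \<longrightarrow> (\<exists>t\<ge>0. a = t *\<^sub>R r))"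

definition admissible_coll :: "(real^'yd) set \<Rightarrow> real^'yc^'m2 \<Rightarrow> real^'yc
    \<Rightarrow> ((real^'yd) \<times> (real^'m2)) list \<Rightarrow> bool" where
  "admissible_coll Yd B2c c2c S \<longleftrightarrow> S \<noteq> [] \<and> distinct (map fst S) \<and>
     (\<forall>(y, p)\<in>set S. y \<in> Yd \<and>
        (p extreme_point_of PiSet B2c c2c \<or> extreme_ray_of p (PiSet B2c c2c)))"

text \<open>The set OU(x,S) of tuples (u, eta_hat, lambda, mu); mu t is the multiplier mu^{t+1}.\<close>
definition OUset :: "(real^'x \<Rightarrow> real^'u^'mF) \<Rightarrow> real^'mF \<Rightarrow> real^'x^'mF
    \<Rightarrow> real^'yd^'m2 \<Rightarrow> real^'m2 \<Rightarrow> real^'x^'m2 \<Rightarrow> real^'u^'m2 \<Rightarrow> real^'yd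
    \<Rightarrow> real^'x \<Rightarrow> ((real^'yd) \<times> (real^'m2)) list
    \<Rightarrow> ((real^'u) \<times> real \<times> (real^'mF) \<times> (nat \<Rightarrow> real)) set" where
  "OUset F h G B2d d B1 E c2d x S =
     {(u, eh, lam, mu).
        let val = (\<lambda>t. c2d \<bullet> fst (S!t) + (d - B1 *v x - E *v u - B2d *v fst (S!t)) \<bullet> snd (S!t));
            red = transpose (F x) *v lam + (\<Sum>t<length S. mu t *\<^sub>R (transpose E *v snd (S!t)))
        in (\<forall>t<length S. eh \<le> val t)
         \<and> vle (F x *v u) (h + G *v x)
         \<and> vle 0 red
         \<and> (\<Sum>t<length S. mu t) = 1
         \<and> (\<forall>t<length S. mu t * (val t - eh) = 0)
         \<and> (\<forall>i. lam$i * (h + G *v x - F x *v u)$i = 0)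
         \<and> (\<forall>j. u$j * red$j = 0)
         \<and> vle 0 u \<and> vle 0 lam \<and> (\<forall>t<length S. 0 \<le> mu t)}"

definition relax_feasible :: "real^'x^'mA \<Rightarrow> real^'mA \<Rightarrow> 'x set
    \<Rightarrow> (real^'x \<Rightarrow> real^'u^'mF) \<Rightarrow> real^'mF \<Rightarrow> real^'x^'mF
    \<Rightarrow> real^'yc^'m2 \<Rightarrow> real^'yd^'m2 \<Rightarrow> (real^'yd) set \<Rightarrow> real^'m2 \<Rightarrow> real^'x^'m2 \<Rightarrow> real^'u^'m2
    \<Rightarrow> real^'yc \<Rightarrow> real^'yd \<Rightarrow> (((real^'yd) \<times> (real^'m2)) list) set \<Rightarrow> real^'x \<Rightarrow> real \<Rightarrow> bool" where
  "relax_feasible A b Ix F h G B2c B2d Yd d B1 E c2c c2d SS x eta \<longleftrightarrow>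
     x \<in> Xset A b Ix \<and>
     (\<forall>S\<in>SS. \<exists>yc yd u eh lam mu.
        vle 0 yc \<and> yd \<in> Yd \<and> c2c \<bullet> yc + c2d \<bullet> yd \<le> eta \<and>
        vle (d - B1 *v x) (B2c *v yc + B2d *v yd + E *v u) \<and>
        (u, eh, lam, mu) \<in> OUset F h G B2d d B1 E c2d x S)"

definition relax_value :: "real^'x^'mA \<Rightarrow> real^'mA \<Rightarrow> 'x set \<Rightarrow> real^'x
    \<Rightarrow> (real^'x \<Rightarrow> real^'u^'mF) \<Rightarrow> real^'mF \<Rightarrow> real^'x^'mF
    \<Rightarrow> real^'yc^'m2 \<Rightarrow> real^'yd^'m2 \<Rightarrow> (real^'yd) set \<Rightarrow> real^'m2 \<Rightarrow> real^'x^'m2 \<Rightarrow> real^'u^'m2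
    \<Rightarrow> real^'yc \<Rightarrow> real^'yd \<Rightarrow> (((real^'yd) \<times> (real^'m2)) list) set \<Rightarrow> ereal" where
  "relax_value A b Ix c1 F h G B2c B2d Yd d B1 E c2c c2d SS =
     Inf {ereal (c1 \<bullet> x + eta) | x eta.
            relax_feasible A b Ix F h G B2c B2d Yd d B1 E c2c c2d SS x eta}"

end

theory Submission
  imports Defs
begin



definition icone :: "'i set \<Rightarrow> ('i \<Rightarrow> 'a::real_vector) \<Rightarrow> 'a set" where
  "icone I v = {\<Sum>i\<in>I. c i *\<^sub>R v i | c. \<forall>i\<in>I. 0 \<le> c i}"

lemma sum_in_convex_cone:
  assumes "convex_cone K" "finite A" "\<And>a. a \<in> A \<Longrightarrow> f a \<in> K"
  shows "sum f A \<in> K"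
  using assms(2,3)
proof (induction A rule: finite_induct)
  case empty then show ?case using assms(1) by (simp add: convex_cone_iff)
next
  case (insert x F) then show ?case using assms(1) by (simp add: convex_cone_iff)
qed

lemma icone_eq_hull:
  assumes "finite I"
  shows "icone I v = convex_cone hull (v ` I)"
proof
  show "icone I v \<subseteq> convex_cone hull (v ` I)"
  proof
    fix x assume "x \<in> icone I v"
    then obtain c where x: "x = (\<Sum>i\<in>I. c i *\<^sub>R v i)" and c: "\<forall>i\<in>I. 0 \<le> c i"
      unfolding icone_def by blast
    show "x \<in> convex_cone hull (v ` I)" unfolding x
      by (rule sum_in_convex_cone[OF convex_cone_convex_cone_hull assms])
        (simp add: c convex_cone_hull_mul hull_inc)
  qed
next
  have cc: "convex_cone (icone I v)"
    unfolding convex_cone_iff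
  proof (intro conjI ballI allI impI)
    show "0 \<in> icone I v" unfolding icone_def
      by (rule CollectI, rule exI[of _ "\<lambda>_. 0"]) simp
  next
    fix x y assume "x \<in> icone I v" "y \<in> icone I v"
    then obtain c d where x: "x = (\<Sum>i\<in>I. c i *\<^sub>R v i)" and c: "\<forall>i\<in>I. 0 \<le> c i"
      and y: "y = (\<Sum>i\<in>I. d i *\<^sub>R v i)" and d: "\<forall>i\<in>I. 0 \<le> d i"
      unfolding icone_def by blast
    have "x + y = (\<Sum>i\<in>I. (c i + d i) *\<^sub>R v i)"
      by (simp add: x y scaleR_add_left sum.distrib)
    then show "x + y \<in> icone I v" unfolding icone_def using c d
      by (intro CollectI exI[of _ "\<lambda>i. c i + d i"]) auto
  next
    fix x and t :: real assume "x \<in> icone I v" "0 \<le> t"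
    then obtain c where x: "x = (\<Sum>i\<in>I. c i *\<^sub>R v i)" and c: "\<forall>i\<in>I. 0 \<le> c i"
      unfolding icone_def by blast
    have "t *\<^sub>R x = (\<Sum>i\<in>I. (t * c i) *\<^sub>R v i)"
      by (simp add: x scaleR_sum_right)
    then show "t *\<^sub>R x \<in> icone I v" unfolding icone_def using c \<open>0 \<le> t\<close>
      by (intro CollectI exI[of _ "\<lambda>i. t * c i"]) auto
  qed
  have sub: "v ` I \<subseteq> icone I v"
  proof
    fix y assume "y \<in> v ` I"
    then obtain j where j: "j \<in> I" "y = v j" by blast
    have "(\<Sum>i\<in>I. (if i = j then 1 else 0) *\<^sub>R v i) = (\<Sum>i\<in>I. if i = j then v i else 0)"
      by (rule sum.cong) auto
    also have "\<dots> = v j" using j assms by simp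
    finally have "(\<Sum>i\<in>I. (if i = j then 1 else 0) *\<^sub>R v i) = v j" .
    then show "y \<in> icone I v" unfolding icone_def using j
      by (intro CollectI exI[of _ "\<lambda>i. if i = j then 1 else 0"]) auto
  qed
  show "convex_cone hull (v ` I) \<subseteq> icone I v"
    using hull_minimal[of "v ` I" "icone I v" convex_cone] sub cc by blast
qed

lemma closed_icone:
  fixes v :: "'i \<Rightarrow> 'a::euclidean_space"
  assumes "finite I" shows "closed (icone I v)"
  unfolding icone_eq_hull[OF assms] using closed_convex_cone_hull assms by blast

lemma convex_icone: "finite I \<Longrightarrow> convex (icone I v)"
  using icone_eq_hull convex_convex_cone_hull by metis

lemma farkas_icone:
  fixes v :: "'i \<Rightarrow> 'a::euclidean_space"
  assumes "finite I" "b \<notin> icone I v"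
  shows "\<exists>z. (\<forall>i\<in>I. z \<bullet> v i \<le> 0) \<and> 0 < z \<bullet> b"
proof -
  obtain a t where at: "a \<bullet> b < t" "\<forall>x\<in>icone I v. t < a \<bullet> x"
    using separating_hyperplane_closed_point[OF convex_icone[OF assms(1)] closed_icone[OF assms(1)] assms(2)]
    by blast
  have cc: "convex_cone (icone I v)" using icone_eq_hull[OF assms(1)] convex_cone_convex_cone_hull by metis
  have "0 \<in> icone I v" using cc by (simp add: convex_cone_iff)
  then have t0: "t < 0" using at by auto
  have "0 \<le> a \<bullet> v i" if i: "i \<in> I" for i
  proof (rule ccontr)
    assume neg: "\<not> 0 \<le> a \<bullet> v i"
    have vi: "v i \<in> icone I v" unfolding icone_eq_hull[OF assms(1)] using i by (simp add: hull_inc)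
    define s where "s = t / (a \<bullet> v i)"
    have s0: "0 \<le> s" using neg t0 by (simp add: s_def divide_nonpos_neg)
    have "s *\<^sub>R v i \<in> icone I v" using cc vi s0 by (simp add: convex_cone_iff)
    then have "t < a \<bullet> (s *\<^sub>R v i)" using at by blast
    moreover have "a \<bullet> (s *\<^sub>R v i) = t" using neg by (simp add: s_def)
    ultimately show False by simp
  qed
  then show ?thesis using at t0 by (intro exI[of _ "-a"]) auto
qed


lemma gen_sum1:
  fixes B :: "real^'n^'m" and c :: "real^'n" and y :: "real^'n"
  shows "(\<Sum>j\<in>UNIV. y$j *\<^sub>R (c$j, column j B)) = (c \<bullet> y, B *v y)"
  by (simp add: prod_eq_iff fst_sum snd_sum vec_eq_iff inner_vec_def column_def
      matrix_vector_mult_def mult.commute)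

lemma gen_sum3:
  fixes s :: "real^'m"
  shows "(\<Sum>i\<in>UNIV. s$i *\<^sub>R ((0::real), - axis i (1::real))) = (0, -s)"
  by (simp add: prod_eq_iff fst_sum snd_sum vec_eq_iff axis_def sum_negf if_distrib[of "\<lambda>z. _ * z"] cong: if_cong)

lemma lp_attain:
  fixes B :: "real^'n^'m" and r :: "real^'m" and c :: "real^'n"
  assumes ne: "\<exists>y. vle 0 y \<and> vle r (B *v y)"
    and bd: "\<forall>y. vle 0 y \<and> vle r (B *v y) \<longrightarrow> L \<le> c \<bullet> y"
  shows "\<exists>y. vle 0 y \<and> vle r (B *v y) \<and> (\<forall>y'. vle 0 y' \<and> vle r (B *v y') \<longrightarrow> c \<bullet> y \<le> c \<bullet> y')"
proof -
  define P where "P = {y. vle 0 y \<and> vle r (B *v y)}"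
  define D :: "(real \<times> (real^'m)) set" where "D = {(t, w). \<exists>y. vle 0 y \<and> c \<bullet> y \<le> t \<and> vle w (B *v y)}"
  define V where "V = range (\<lambda>j. (c$j, column j B)) \<union> {(1::real, 0::real^'m)} \<union>
                      range (\<lambda>i. ((0::real), - axis i (1::real)))"
  have finV: "finite V" unfolding V_def by simp
  have ccD: "convex_cone D"
    unfolding convex_cone_iff
  proof (intro conjI ballI allI impI)
    show "0 \<in> D" unfolding D_def by (auto simp: vle_def zero_prod_def intro!: exI[of _ 0])
  next
    fix p q assume "p \<in> D" "q \<in> D"
    then obtain t1 w1 t2 w2 y1 y2 where p: "p = (t1, w1)" and q: "q = (t2, w2)"
      and y1: "vle 0 y1" "c \<bullet> y1 \<le> t1" "vle w1 (B *v y1)"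
      and y2: "vle 0 y2" "c \<bullet> y2 \<le> t2" "vle w2 (B *v y2)"
      unfolding D_def by auto
    show "p + q \<in> D" unfolding D_def p q using y1 y2
      by (auto simp: vle_def inner_add_right matrix_vector_right_distrib intro!: exI[of _ "y1 + y2"] add_mono)
  next
    fix p and s :: real assume "p \<in> D" "0 \<le> s"
    then obtain t1 w1 y1 where p: "p = (t1, w1)"
      and y1: "vle 0 y1" "c \<bullet> y1 \<le> t1" "vle w1 (B *v y1)"
      unfolding D_def by auto
    show "s *\<^sub>R p \<in> D" unfolding D_def p using y1 \<open>0 \<le> s\<close>
      by (auto simp: vle_def matrix_vector_mult_scaleR intro!: exI[of _ "s *\<^sub>R y1"] mult_left_mono)
  qed
  have VD: "V \<subseteq> D"
  proof
    fix p assume "p \<in> V"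
    then consider j where "p = (c$j, column j B)" | "p = (1, 0)" | i where "p = (0, - axis i 1)"
      unfolding V_def by blast
    then show "p \<in> D"
    proof cases
      case 1
      then show ?thesis unfolding D_def
        by (auto simp: vle_def axis_def column_def matrix_vector_mult_def inner_vec_def
            if_distrib[of "\<lambda>z. _ * z"] cong: if_cong intro!: exI[of _ "axis j 1"])
    next
      case 2
      then show ?thesis unfolding D_def by (auto simp: vle_def intro!: exI[of _ 0])
    next
      case 3
      then show ?thesis unfolding D_def by (auto simp: vle_def axis_def intro!: exI[of _ 0])
    qed
  qed
  have hullD: "convex_cone hull V \<subseteq> D"
    using hull_minimal[of V D convex_cone] VD ccD by blast
  have Dhull: "D \<subseteq> convex_cone hull V"
  proof
    fix p assume "p \<in> D"
    then obtain t w y where p: "p = (t, w)" and y: "vle 0 y" "c \<bullet> y \<le> t" "vle w (B *v y)"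
      unfolding D_def by auto
    have cc: "convex_cone (convex_cone hull V)" by (rule convex_cone_convex_cone_hull)
    have a1: "(\<Sum>j\<in>UNIV. y$j *\<^sub>R (c$j, column j B)) \<in> convex_cone hull V"
      apply (rule sum_in_convex_cone[OF cc], simp)
      apply (rule convex_cone_hull_mul, rule hull_inc)
      using y(1) by (auto simp: V_def vle_def)
    have a2: "(t - c \<bullet> y) *\<^sub>R (1::real, 0::real^'m) \<in> convex_cone hull V"
      using y(2) by (intro convex_cone_hull_mul hull_inc) (auto simp: V_def)
    have a3: "(\<Sum>i\<in>UNIV. (B *v y - w)$i *\<^sub>R ((0::real), - axis i (1::real))) \<in> convex_cone hull V"
      apply (rule sum_in_convex_cone[OF cc], simp)
      apply (rule convex_cone_hull_mul, rule hull_inc)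
      using y(3) by (auto simp: V_def vle_def)
    have "p = (\<Sum>j\<in>UNIV. y$j *\<^sub>R (c$j, column j B)) + (t - c \<bullet> y) *\<^sub>R (1::real, 0::real^'m)
           + (\<Sum>i\<in>UNIV. (B *v y - w)$i *\<^sub>R ((0::real), - axis i (1::real)))"
      unfolding gen_sum1 gen_sum3 p by simp
    then show "p \<in> convex_cone hull V"
      using a1 a2 a3 by (simp add: convex_cone_hull_add)
  qed
  have Deq: "D = convex_cone hull V" using hullD Dhull by blast
  have clD: "closed D" unfolding Deq using closed_convex_cone_hull[OF finV] .
  define m where "m = Inf ((\<lambda>y. c \<bullet> y) ` P)"
  have Pne: "(\<lambda>y. c \<bullet> y) ` P \<noteq> {}" using ne unfolding P_def by auto
  have bdd: "bdd_below ((\<lambda>y. c \<bullet> y) ` P)" using bd unfolding P_def bdd_below_def by auto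
  have inD: "(m + inverse (real (Suc k)), r) \<in> D" for k
  proof -
    have "m < m + inverse (real (Suc k))" by simp
    then obtain z where "z \<in> (\<lambda>y. c \<bullet> y) ` P" "z < m + inverse (real (Suc k))"
      using cInf_lessD[OF Pne] unfolding m_def by blast
    then obtain y where "y \<in> P" "c \<bullet> y < m + inverse (real (Suc k))" by blast
    then show ?thesis unfolding D_def P_def by (auto intro!: exI[of _ y])
  qed
  have lim: "(\<lambda>k. (m + inverse (real (Suc k)), r)) \<longlonglongrightarrow> (m, r)"
  proof (intro tendsto_Pair tendsto_const)
    show "(\<lambda>k. m + inverse (real (Suc k))) \<longlonglongrightarrow> m"
      using tendsto_add[OF tendsto_const[of m] LIMSEQ_inverse_real_of_nat] by simp
  qed
  have "(m, r) \<in> D" using closed_sequentially[OF clD _ lim] inD by blast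
  then obtain y where y: "vle 0 y" "c \<bullet> y \<le> m" "vle r (B *v y)" unfolding D_def by auto
  have "c \<bullet> y \<le> c \<bullet> y'" if "vle 0 y'" "vle r (B *v y')" for y'
  proof -
    have "m \<le> c \<bullet> y'" unfolding m_def using that bdd by (auto simp: P_def intro!: cInf_lower)
    then show ?thesis using y(2) by simp
  qed
  then show ?thesis using y by blast
qed




lemma continuous_on_Min_fin:
  fixes f :: "'i \<Rightarrow> 'a::topological_space \<Rightarrow> real"
  assumes "finite A" "A \<noteq> {}" "\<And>t. t \<in> A \<Longrightarrow> continuous_on S (f t)"
  shows "continuous_on S (\<lambda>u. Min ((\<lambda>t. f t u) ` A))"
  using assms
proof (induction A rule: finite_ne_induct)
  case (singleton x) then show ?case by simp
next
  case (insert x F)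
  have "continuous_on S (\<lambda>u. min (f x u) (Min ((\<lambda>t. f t u) ` F)))"
    using insert by (intro continuous_on_min) auto
  moreover have "(\<lambda>u. Min ((\<lambda>t. f t u) ` insert x F)) = (\<lambda>u. min (f x u) (Min ((\<lambda>t. f t u) ` F)))"
    using insert by (simp add: Min_insert)
  ultimately show ?case by metis
qed

lemma closed_Uset:
  fixes Fm :: "real^'u^'m" and g :: "real^'m"
  shows "closed {u. vle 0 u \<and> vle (Fm *v u) g}"
proof -
  have "{u. vle 0 u \<and> vle (Fm *v u) g} = {u. \<forall>i. 0 \<le> u$i} \<inter> {u. \<forall>i. (Fm *v u)$i \<le> g$i}"
    by (auto simp: vle_def)
  moreover have "closed {u::real^'u. \<forall>i. 0 \<le> u$i}"
    by (intro closed_Collect_all closed_Collect_le continuous_intros)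
  moreover have "closed {u. \<forall>i. (Fm *v u)$i \<le> g$i}"
    by (intro closed_Collect_all closed_Collect_le continuous_intros
        linear_continuous_on matrix_vector_mul_linear)
  ultimately show ?thesis by auto
qed




lemma mv_row: "((Fm::real^'u^'m) *v y)$i = row i Fm \<bullet> y"
  by (simp add: matrix_vector_mult_def row_def inner_vec_def mult.commute)

lemma comp_axis: "(y::real^'u)$j = axis j 1 \<bullet> y"
  by (simp add: inner_axis')

lemma ev_lin:
  fixes x w c :: "'a::real_inner"
  assumes "l < r + c \<bullet> x"
  shows "eventually (\<lambda>\<epsilon>::real. l < r + c \<bullet> (x + \<epsilon> *\<^sub>R w)) (at_right 0)"
proof -
  have "((\<lambda>\<epsilon>::real. r + c \<bullet> (x + \<epsilon> *\<^sub>R w)) \<longlongrightarrow> r + c \<bullet> (x + 0 *\<^sub>R w)) (at_right 0)"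
    by (intro tendsto_intros)
  then show ?thesis using assms by (intro order_tendstoD(1)) auto
qed

lemma transpose_sum_rows:
  "transpose (Fm::real^'u^'m) *v lam = (\<Sum>i\<in>UNIV. lam$i *\<^sub>R row i Fm)"
  by (simp add: vec_eq_iff transpose_def matrix_vector_mult_def row_def mult.commute)

lemma sum_axis_vec:
  fixes J :: "'u::finite set" and f :: "'u \<Rightarrow> real"
  shows "(\<Sum>j\<in>J. f j *\<^sub>R axis j (1::real)) = (\<chi> j. if j \<in> J then f j else 0)"
  by (simp add: vec_eq_iff axis_def if_distrib[of "\<lambda>z. _ * z"] cong: if_cong)




lemma kkt:
  fixes Fm :: "real^'u^'m" and g :: "real^'m" and a :: "nat \<Rightarrow> real^'u" and k :: "nat \<Rightarrow> real"
  assumes n: "0 < n" and Une: "\<exists>u. vle 0 u \<and> vle (Fm *v u) g"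
    and Ubd: "bounded {u. vle 0 u \<and> vle (Fm *v u) g}"
  shows "\<exists>u eh lam mu. vle 0 u \<and> vle (Fm *v u) g \<and> (\<forall>t<n. eh \<le> k t - a t \<bullet> u)
     \<and> vle 0 (transpose Fm *v lam + (\<Sum>t<n. mu t *\<^sub>R a t))
     \<and> (\<Sum>t<n. mu t) = 1 \<and> (\<forall>t<n. mu t * (k t - a t \<bullet> u - eh) = 0)
     \<and> (\<forall>i. lam$i * (g - Fm *v u)$i = 0)
     \<and> (\<forall>j. u$j * (transpose Fm *v lam + (\<Sum>t<n. mu t *\<^sub>R a t))$j = 0)
     \<and> vle 0 lam \<and> (\<forall>t<n. 0 \<le> mu t)"
proof -
  define U where "U = {u. vle 0 u \<and> vle (Fm *v u) g}"
  define phi where "phi u = Min ((\<lambda>t. k t - a t \<bullet> u) ` {..<n})" for u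
  have cU: "compact U" unfolding U_def using Ubd closed_Uset by (simp add: compact_eq_bounded_closed)
  have neU: "U \<noteq> {}" using Une unfolding U_def by auto
  have cphi: "continuous_on U phi" unfolding phi_def
    using n by (intro continuous_on_Min_fin continuous_intros) auto
  obtain us where us: "us \<in> U" and usmax: "\<And>u. u \<in> U \<Longrightarrow> phi u \<le> phi us"
    using continuous_attains_sup[OF cU neU cphi] by blast
  define eh where "eh = phi us"
  have hle: "eh \<le> k t - a t \<bullet> us" if "t < n" for t
    unfolding eh_def phi_def using that by (intro Min_le) auto
  have ehin: "eh \<in> (\<lambda>t. k t - a t \<bullet> us) ` {..<n}"
    unfolding eh_def phi_def using n by (intro Min_in) auto
  define T where "T = {t. t < n \<and> k t - a t \<bullet> us = eh}"
  define Iact where "Iact = {i. (Fm *v us)$i = g$i}"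
  define J where "J = {j. us$j = 0}"
  have finT: "finite T" unfolding T_def by simp
  have Tsub: "T \<subseteq> {..<n}" unfolding T_def by auto
  define v :: "nat + ('m + 'u) \<Rightarrow> real \<times> (real^'u)" where
    "v = case_sum (\<lambda>t. (1, a t)) (case_sum (\<lambda>i. (0, row i Fm)) (\<lambda>j. (0, - axis j 1)))"
  define I where "I = T <+> (Iact <+> J)"
  have finI: "finite I" unfolding I_def using finT by simp
  show ?thesis
  proof (cases "(1::real, 0::real^'u) \<in> icone I v")
    case True
    then obtain c where c0: "\<forall>i\<in>I. 0 \<le> c i" and csum: "(\<Sum>i\<in>I. c i *\<^sub>R v i) = (1, 0)"
      unfolding icone_def by auto
    have split: "(\<Sum>i\<in>I. c i *\<^sub>R v i) =
        (\<Sum>t\<in>T. c (Inl t) *\<^sub>R (1, a t)) + ((\<Sum>i\<in>Iact. c (Inr (Inl i)) *\<^sub>R (0, row i Fm))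
          + (\<Sum>j\<in>J. c (Inr (Inr j)) *\<^sub>R (0, - axis j 1)))"
      unfolding I_def using finT by (simp add: sum.Plus v_def o_def)
    define mu where "mu t = (if t \<in> T then c (Inl t) else 0)" for t
    define lam :: "real^'m" where "lam = (\<chi> i. if i \<in> Iact then c (Inr (Inl i)) else 0)"
    define nu :: "real^'u" where "nu = (\<chi> j. if j \<in> J then c (Inr (Inr j)) else 0)"
    have f1: "(\<Sum>t\<in>T. c (Inl t)) = 1"
      using arg_cong[OF csum, of fst] unfolding split by (simp add: fst_sum)
    have f2: "(\<Sum>t\<in>T. c (Inl t) *\<^sub>R a t) + (\<Sum>i\<in>Iact. c (Inr (Inl i)) *\<^sub>R row i Fm)
              - (\<Sum>j\<in>J. c (Inr (Inr j)) *\<^sub>R axis j 1) = 0"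
      using arg_cong[OF csum, of snd] unfolding split by (simp add: snd_sum sum_negf) (simp add: add_diff_eq)
    have mus: "(\<Sum>t<n. mu t) = 1"
    proof -
      have "(\<Sum>t<n. mu t) = (\<Sum>t\<in>{..<n} \<inter> T. c (Inl t))"
        unfolding mu_def by (simp add: sum.inter_restrict)
      also have "{..<n} \<inter> T = T" using Tsub by auto
      finally show ?thesis using f1 by simp
    qed
    have mua: "(\<Sum>t<n. mu t *\<^sub>R a t) = (\<Sum>t\<in>T. c (Inl t) *\<^sub>R a t)"
    proof -
      have "(\<Sum>t<n. mu t *\<^sub>R a t) = (\<Sum>t\<in>{..<n} \<inter> T. c (Inl t) *\<^sub>R a t)"
        unfolding mu_def by (simp add: sum.inter_restrict if_distrib[of "\<lambda>z. z *\<^sub>R _"] cong: if_cong)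
      also have "{..<n} \<inter> T = T" using Tsub by auto
      finally show ?thesis .
    qed
    have lamr: "transpose Fm *v lam = (\<Sum>i\<in>Iact. c (Inr (Inl i)) *\<^sub>R row i Fm)"
    proof -
      have "transpose Fm *v lam = (\<Sum>i\<in>UNIV. (if i \<in> Iact then c (Inr (Inl i)) else 0) *\<^sub>R row i Fm)"
        unfolding transpose_sum_rows lam_def by simp
      also have "\<dots> = (\<Sum>i\<in>Iact. c (Inr (Inl i)) *\<^sub>R row i Fm)"
        by (simp add: sum.If_cases if_distrib[of "\<lambda>z. z *\<^sub>R _"] cong: if_cong)
      finally show ?thesis .
    qed
    have nur: "nu = (\<Sum>j\<in>J. c (Inr (Inr j)) *\<^sub>R axis j 1)"
      unfolding nu_def sum_axis_vec by simp
    have red: "transpose Fm *v lam + (\<Sum>t<n. mu t *\<^sub>R a t) = nu"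
      using f2 unfolding mua lamr nur by (simp add: algebra_simps)
    have cI: "c (Inl t) \<ge> 0" if "t \<in> T" for t using c0 that unfolding I_def by auto
    have cA: "c (Inr (Inl i)) \<ge> 0" if "i \<in> Iact" for i using c0 that unfolding I_def by auto
    have cJ: "c (Inr (Inr j)) \<ge> 0" if "j \<in> J" for j using c0 that unfolding I_def by auto
    show ?thesis
    proof (intro exI conjI)
      show "vle 0 us" "vle (Fm *v us) g" using us unfolding U_def by auto
      show "\<forall>t<n. eh \<le> k t - a t \<bullet> us" using hle by auto
      show "vle 0 (transpose Fm *v lam + (\<Sum>t<n. mu t *\<^sub>R a t))"
        unfolding red nu_def vle_def using cJ by auto
      show "(\<Sum>t<n. mu t) = 1" by (rule mus)
      show "\<forall>t<n. mu t * (k t - a t \<bullet> us - eh) = 0" unfolding mu_def T_def by auto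
      show "\<forall>i. lam$i * (g - Fm *v us)$i = 0" unfolding lam_def Iact_def by auto
      show "\<forall>j. us$j * (transpose Fm *v lam + (\<Sum>t<n. mu t *\<^sub>R a t))$j = 0"
        unfolding red nu_def J_def by auto
      show "vle 0 lam" unfolding lam_def vle_def using cA by auto
      show "\<forall>t<n. 0 \<le> mu t" unfolding mu_def using cI by auto
    qed
  next
    case False
    obtain z where zv: "\<forall>i\<in>I. z \<bullet> v i \<le> 0" and zb: "0 < z \<bullet> (1::real, 0::real^'u)"
      using farkas_icone[OF finI False] by blast
    obtain z0 w where z: "z = (z0, w)" by (cases z)
    have z0: "0 < z0" using zb z by simp
    have zT: "z0 + w \<bullet> a t \<le> 0" if "t \<in> T" for t
      using zv[rule_format, of "Inl t"] that unfolding I_def v_def z by (auto simp: inner_Pair)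
    have zA: "w \<bullet> row i Fm \<le> 0" if "i \<in> Iact" for i
      using zv[rule_format, of "Inr (Inl i)"] that unfolding I_def v_def z by (auto simp: inner_Pair inner_commute)
    have zJ: "0 \<le> w$j" if "j \<in> J" for j
      using zv[rule_format, of "Inr (Inr j)"] that unfolding I_def v_def z by (auto simp: inner_Pair inner_axis)
    have usU: "vle 0 us" "vle (Fm *v us) g" using us unfolding U_def by auto
    have E0: "eventually (\<lambda>\<epsilon>::real. 0 < \<epsilon>) (at_right 0)" by (rule eventually_at_right_less)
    have E1: "eventually (\<lambda>\<epsilon>. \<forall>t\<in>{..<n}. eh < k t + (- a t) \<bullet> (us + \<epsilon> *\<^sub>R w)) (at_right 0)"
    proof (rule eventually_ball_finite, simp, intro ballI)
      fix t assume t: "t \<in> {..<n}"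
      show "eventually (\<lambda>\<epsilon>. eh < k t + (- a t) \<bullet> (us + \<epsilon> *\<^sub>R w)) (at_right 0)"
      proof (cases "t \<in> T")
        case True
        show ?thesis using E0
        proof (rule eventually_mono)
          fix \<epsilon> :: real assume e: "0 < \<epsilon>"
          have "k t + (- a t) \<bullet> (us + \<epsilon> *\<^sub>R w) = eh - \<epsilon> * (w \<bullet> a t)"
            using True unfolding T_def by (simp add: inner_add_right inner_commute)
          moreover have "\<epsilon> * (w \<bullet> a t) \<le> \<epsilon> * (- z0)" using zT[OF True] e by (intro mult_left_mono) auto
          moreover have "0 < \<epsilon> * z0" using e z0 by simp
          ultimately show "eh < k t + (- a t) \<bullet> (us + \<epsilon> *\<^sub>R w)" by linarith
        qed
      next
        case False
        then have "eh < k t + (- a t) \<bullet> us" using hle[of t] t unfolding T_def by auto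
        then show ?thesis by (rule ev_lin)
      qed
    qed
    have E2: "eventually (\<lambda>\<epsilon>. \<forall>j. 0 \<le> 0 + axis j 1 \<bullet> (us + \<epsilon> *\<^sub>R w)) (at_right 0)"
    proof (rule eventually_all_finite)
      fix j :: 'u
      show "eventually (\<lambda>\<epsilon>. 0 \<le> 0 + axis j 1 \<bullet> (us + \<epsilon> *\<^sub>R w)) (at_right 0)"
      proof (cases "j \<in> J")
        case True
        show ?thesis using E0
          by (rule eventually_mono) (use True zJ[OF True] in \<open>auto simp: J_def inner_axis'\<close>)
      next
        case False
        then have "0 < 0 + axis j 1 \<bullet> us" using usU unfolding J_def vle_def
          by (auto simp: inner_axis' order_le_less)
        then show ?thesis using ev_lin[of 0 0 "axis j 1" us w] by (auto elim: eventually_mono)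
      qed
    qed
    have E3: "eventually (\<lambda>\<epsilon>. \<forall>i. 0 \<le> g$i + (- row i Fm) \<bullet> (us + \<epsilon> *\<^sub>R w)) (at_right 0)"
    proof (rule eventually_all_finite)
      fix i :: 'm
      show "eventually (\<lambda>\<epsilon>. 0 \<le> g$i + (- row i Fm) \<bullet> (us + \<epsilon> *\<^sub>R w)) (at_right 0)"
      proof (cases "i \<in> Iact")
        case True
        show ?thesis using E0
        proof (rule eventually_mono)
          fix \<epsilon> :: real assume e: "0 < \<epsilon>"
          have "g$i + (- row i Fm) \<bullet> (us + \<epsilon> *\<^sub>R w) = - \<epsilon> * (w \<bullet> row i Fm)"
            using True unfolding Iact_def mv_row by (simp add: inner_add_right inner_commute)
          moreover have "\<epsilon> * (w \<bullet> row i Fm) \<le> 0" using zA[OF True] e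
            by (simp add: mult_nonneg_nonpos)
          ultimately show "0 \<le> g$i + (- row i Fm) \<bullet> (us + \<epsilon> *\<^sub>R w)" by simp
        qed
      next
        case False
        then have "0 < g$i + (- row i Fm) \<bullet> us" using usU unfolding Iact_def vle_def mv_row
          by (auto simp: order_le_less)
        then show ?thesis using ev_lin[of 0 "g$i" "- row i Fm" us w] by (auto elim: eventually_mono)
      qed
    qed
    obtain \<epsilon> :: real where e: "0 < \<epsilon>"
      and e1: "\<forall>t\<in>{..<n}. eh < k t + (- a t) \<bullet> (us + \<epsilon> *\<^sub>R w)"
      and e2: "\<forall>j. 0 \<le> 0 + axis j 1 \<bullet> (us + \<epsilon> *\<^sub>R w)"
      and e3: "\<forall>i. 0 \<le> g$i + (- row i Fm) \<bullet> (us + \<epsilon> *\<^sub>R w)"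
      using eventually_happens'[OF _ eventually_conj[OF E0 eventually_conj[OF E1 eventually_conj[OF E2 E3]]]]
      by auto
    define u' where "u' = us + \<epsilon> *\<^sub>R w"
    have u'U: "u' \<in> U" unfolding U_def vle_def u'_def
      using e2 e3 by (auto simp: inner_axis' mv_row)
    have "eh < phi u'" unfolding phi_def using n e1 unfolding u'_def
      by (subst Min_gr_iff) auto
    moreover have "phi u' \<le> eh" using usmax[OF u'U] unfolding eh_def .
    ultimately show ?thesis by simp
  qed
qed



lemma Ev_inner: "((E::real^'u^'m) *v u) \<bullet> p = (transpose E *v p) \<bullet> u"
  by (simp add: inner_vec_def matrix_vector_mult_def transpose_def sum_distrib_left sum_distrib_right mult_ac)
     (rule sum.swap)




theorem corollary24:
  fixes A :: "real^'x^'mA" and b :: "real^'mA" and Ix :: "'x set" and c1 :: "real^'x"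
    and F :: "real^'x \<Rightarrow> real^'u^'mF" and h :: "real^'mF" and G :: "real^'x^'mF"
    and B2c :: "real^'yc^'m2" and B2d :: "real^'yd^'m2" and Yd :: "(real^'yd) set"
    and d :: "real^'m2" and B1 :: "real^'x^'m2" and E :: "real^'u^'m2"
    and c2c :: "real^'yc" and c2d :: "real^'yd"
    and SS :: "(((real^'yd) \<times> (real^'m2)) list) set"
  assumes Yd_fin: "finite Yd"
    and Yd_int: "\<forall>y\<in>Yd. \<forall>i. y$i \<in> \<int> \<and> 0 \<le> y$i"
    and U_ok: "\<forall>x\<in>Xset A b Ix. Uset F h G x \<noteq> {} \<and> bounded (Uset F h G x)"
    and standing: "Inf {ereal (c1 \<bullet> x + c2c \<bullet> yc + c2d \<bullet> yd) | x u yc yd.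
                      x \<in> Xset A b Ix \<and> u \<in> Uset F h G x \<and>
                      (yc, yd) \<in> Yset B2c B2d Yd d B1 E x u} > -\<infinity>"
    and SS_ok: "\<forall>S\<in>SS. admissible_coll Yd B2c c2c S"
  shows "(\<forall>x\<in>Xset A b Ix. \<forall>eta. second_stage F h G B2c B2d Yd d B1 E c2c c2d x \<le> ereal eta
            \<longrightarrow> relax_feasible A b Ix F h G B2c B2d Yd d B1 E c2c c2d SS x eta)
       \<and> relax_value A b Ix c1 F h G B2c B2d Yd d B1 E c2c c2d SS
           \<le> wstar A b Ix c1 F h G B2c B2d Yd d B1 E c2c c2d"
proof -
  have part1: "relax_feasible A b Ix F h G B2c B2d Yd d B1 E c2c c2d SS x eta"
    if xX: "x \<in> Xset A b Ix" and ss: "second_stage F h G B2c B2d Yd d B1 E c2c c2d x \<le> ereal eta"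
    for x eta
  proof -
    have "\<exists>yc yd u eh lam mu.
        vle 0 yc \<and> yd \<in> Yd \<and> c2c \<bullet> yc + c2d \<bullet> yd \<le> eta \<and>
        vle (d - B1 *v x) (B2c *v yc + B2d *v yd + E *v u) \<and>
        (u, eh, lam, mu) \<in> OUset F h G B2d d B1 E c2d x S" if S: "S \<in> SS" for S
    proof -
      have adm: "S \<noteq> []" using SS_ok S by (simp add: admissible_coll_def)
      define n where "n = length S"
      have n0: "0 < n" using adm by (simp add: n_def)
      define a where "a t = transpose E *v snd (S!t)" for t
      define k where "k t = c2d \<bullet> fst (S!t) + (d - B1 *v x - B2d *v fst (S!t)) \<bullet> snd (S!t)" for t
      have Une: "\<exists>u. vle 0 u \<and> vle (F x *v u) (h + G *v x)" using U_ok xX by (auto simp: Uset_def)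
      have Ubd: "bounded {u. vle 0 u \<and> vle (F x *v u) (h + G *v x)}" using U_ok xX by (simp add: Uset_def)
      from kkt[OF n0 Une Ubd, of k a] obtain u eh lam mu where
        u0: "vle 0 u" and uF: "vle (F x *v u) (h + G *v x)" and ehle: "\<forall>t<n. eh \<le> k t - a t \<bullet> u"
        and red: "vle 0 (transpose (F x) *v lam + (\<Sum>t<n. mu t *\<^sub>R a t))"
        and mus: "(\<Sum>t<n. mu t) = 1" and cs1: "\<forall>t<n. mu t * (k t - a t \<bullet> u - eh) = 0"
        and cs2: "\<forall>i. lam$i * (h + G *v x - F x *v u)$i = 0"
        and cs3: "\<forall>j. u$j * (transpose (F x) *v lam + (\<Sum>t<n. mu t *\<^sub>R a t))$j = 0"
        and lam0: "vle 0 lam" and mu0: "\<forall>t<n. 0 \<le> mu t"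
        by blast
      have valeq: "c2d \<bullet> fst (S!t) + (d - B1 *v x - E *v u - B2d *v fst (S!t)) \<bullet> snd (S!t) = k t - a t \<bullet> u" for t
        unfolding k_def a_def by (simp add: inner_diff_left Ev_inner algebra_simps)
      have OU: "(u, eh, lam, mu) \<in> OUset F h G B2d d B1 E c2d x S"
        unfolding OUset_def Let_def using u0 uF ehle red mus cs1 cs2 cs3 lam0 mu0
        by (simp add: valeq n_def a_def)
      have uU: "u \<in> Uset F h G x" using u0 uF by (simp add: Uset_def)
      define Y where "Y = Yset B2c B2d Yd d B1 E x u"
      have Ymem: "(yc, yd) \<in> Y \<longleftrightarrow> vle 0 yc \<and> yd \<in> Yd \<and>
          vle (d - B1 *v x - E *v u - B2d *v yd) (B2c *v yc)" for yc yd
        unfolding Y_def Yset_def vle_def by (auto simp: algebra_simps)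
      have infle: "(INF yy\<in>Y. ereal (c2c \<bullet> fst yy + c2d \<bullet> snd yy)) \<le> ereal eta"
      proof -
        have "(INF yy\<in>Y. ereal (c2c \<bullet> fst yy + c2d \<bullet> snd yy)) \<le> second_stage F h G B2c B2d Yd d B1 E c2c c2d x"
          unfolding second_stage_def Y_def using uU by (rule SUP_upper)
        then show ?thesis using ss by simp
      qed
      have Yne: "Y \<noteq> {}"
      proof
        assume "Y = {}"
        then show False using infle by (simp add: top_ereal_def)
      qed
      obtain L where L: "\<And>yc yd. (yc, yd) \<in> Y \<Longrightarrow> L \<le> c2c \<bullet> yc + c2d \<bullet> yd"
      proof -
        define M where "M = Inf {ereal (c1 \<bullet> x + c2c \<bullet> yc + c2d \<bullet> yd) | x u yc yd.
                      x \<in> Xset A b Ix \<and> u \<in> Uset F h G x \<and>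
                      (yc, yd) \<in> Yset B2c B2d Yd d B1 E x u}"
        have Mle: "M \<le> ereal (c1 \<bullet> x + c2c \<bullet> yc + c2d \<bullet> yd)" if "(yc, yd) \<in> Y" for yc yd
          unfolding M_def using that xX uU unfolding Y_def by (intro Inf_lower) blast
        obtain y0 where "y0 \<in> Y" using Yne by blast
        then obtain yc0 yd0 where y0: "(yc0, yd0) \<in> Y" by (cases y0) auto
        have "M \<noteq> \<infinity>" using Mle[OF y0] by auto
        moreover have "M \<noteq> -\<infinity>" using standing unfolding M_def by auto
        ultimately obtain m where m: "M = ereal m" by (cases M) auto
        show ?thesis
        proof (rule that[of "m - c1 \<bullet> x"])
          fix yc yd assume "(yc, yd) \<in> Y"
          from Mle[OF this] show "m - c1 \<bullet> x \<le> c2c \<bullet> yc + c2d \<bullet> yd" unfolding m by simp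
        qed
      qed
      define Q where "Q = {yd \<in> Yd. \<exists>yc. (yc, yd) \<in> Y}"
      have opt: "\<exists>yc. (yc, yd) \<in> Y \<and> (\<forall>yc'. (yc', yd) \<in> Y \<longrightarrow> c2c \<bullet> yc \<le> c2c \<bullet> yc')"
        if yd: "yd \<in> Q" for yd
      proof -
        have ne: "\<exists>yc. vle 0 yc \<and> vle (d - B1 *v x - E *v u - B2d *v yd) (B2c *v yc)"
          using yd unfolding Q_def Ymem by blast
        have bd: "\<forall>yc. vle 0 yc \<and> vle (d - B1 *v x - E *v u - B2d *v yd) (B2c *v yc)
                    \<longrightarrow> L - c2d \<bullet> yd \<le> c2c \<bullet> yc"
          using L yd unfolding Q_def Ymem by force
        from lp_attain[OF ne bd] show ?thesis using yd unfolding Q_def Ymem by blast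
      qed
      obtain ycopt where ycopt: "\<And>yd. yd \<in> Q \<Longrightarrow> (ycopt yd, yd) \<in> Y \<and>
           (\<forall>yc'. (yc', yd) \<in> Y \<longrightarrow> c2c \<bullet> ycopt yd \<le> c2c \<bullet> yc')"
        using opt by metis
      have finQ: "finite Q" unfolding Q_def using Yd_fin by simp
      have neQ: "Q \<noteq> {}"
      proof -
        obtain yy where yy: "yy \<in> Y" using Yne by blast
        obtain yc yd where yy': "yy = (yc, yd)" by (cases yy)
        have "yd \<in> Yd" using Ymem[of yc yd] yy unfolding yy' by simp
        then have "yd \<in> Q" unfolding Q_def using yy unfolding yy' by blast
        then show ?thesis by blast
      qed
      define f where "f yd = c2c \<bullet> ycopt yd + c2d \<bullet> yd" for yd
      have "Min (f ` Q) \<in> f ` Q" using finQ neQ by (intro Min_in) auto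
      then obtain yds where yds: "yds \<in> Q" "f yds = Min (f ` Q)" by auto
      have fmin: "f yds \<le> f yd" if "yd \<in> Q" for yd
        using yds finQ that by simp
      have "ereal (f yds) \<le> (INF yy\<in>Y. ereal (c2c \<bullet> fst yy + c2d \<bullet> snd yy))"
      proof (rule INF_greatest)
        fix yy assume yy: "yy \<in> Y"
        obtain yc' yd' where yy': "yy = (yc', yd')" by (cases yy)
        have "yd' \<in> Yd" using Ymem[of yc' yd'] yy unfolding yy' by simp
        then have q: "yd' \<in> Q" unfolding Q_def using yy unfolding yy' by blast
        have "f yds \<le> f yd'" by (rule fmin[OF q])
        also have "f yd' \<le> c2c \<bullet> yc' + c2d \<bullet> yd'"
          using ycopt[OF q] yy unfolding yy' f_def by auto
        finally show "ereal (f yds) \<le> ereal (c2c \<bullet> fst yy + c2d \<bullet> snd yy)" unfolding yy' by simp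
      qed
      then have "ereal (f yds) \<le> ereal eta" using infle by (rule order_trans)
      then have costle: "f yds \<le> eta" by simp
      have ymem: "(ycopt yds, yds) \<in> Y" using ycopt[OF yds(1)] by blast
      then have y3: "vle 0 (ycopt yds)" "yds \<in> Yd" "vle (d - B1 *v x - E *v u - B2d *v yds) (B2c *v ycopt yds)"
        unfolding Ymem by simp_all
      have y4: "vle (d - B1 *v x) (B2c *v ycopt yds + B2d *v yds + E *v u)"
        using y3(3) unfolding vle_def by (auto simp: algebra_simps)
      show ?thesis
        apply (rule exI[of _ "ycopt yds"], rule exI[of _ yds], rule exI[of _ u])
        apply (rule exI[of _ eh], rule exI[of _ lam], rule exI[of _ mu])
        using y3(1,2) y4 costle OU unfolding f_def by simp
    qed
    then show ?thesis using xX unfolding relax_feasible_def by blast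
  qed
  have part2: "relax_value A b Ix c1 F h G B2c B2d Yd d B1 E c2c c2d SS
      \<le> ereal (c1 \<bullet> x) + second_stage F h G B2c B2d Yd d B1 E c2c c2d x"
    if xX: "x \<in> Xset A b Ix" for x
  proof -
    have le: "relax_value A b Ix c1 F h G B2c B2d Yd d B1 E c2c c2d SS \<le> ereal (c1 \<bullet> x + eta)"
      if "second_stage F h G B2c B2d Yd d B1 E c2c c2d x \<le> ereal eta" for eta
      unfolding relax_value_def using part1[OF xX that] by (intro Inf_lower) blast
    show ?thesis
    proof (cases "second_stage F h G B2c B2d Yd d B1 E c2c c2d x")
      case (real r)
      then show ?thesis using le[of r] by simp
    next
      case PInf
      then show ?thesis by simp
    next
      case MInf
      then have "relax_value A b Ix c1 F h G B2c B2d Yd d B1 E c2c c2d SS \<le> ereal B" for B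
        using le[of "B - c1 \<bullet> x"] by simp
      then have "relax_value A b Ix c1 F h G B2c B2d Yd d B1 E c2c c2d SS = -\<infinity>" by (rule ereal_bot)
      then show ?thesis by simp
    qed
  qed
  have "relax_value A b Ix c1 F h G B2c B2d Yd d B1 E c2c c2d SS
           \<le> wstar A b Ix c1 F h G B2c B2d Yd d B1 E c2c c2d"
    unfolding wstar_def using part2 by (rule INF_greatest)
  then show ?thesis using part1 by blast
qed


end
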